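(* Let $G$ be a $k$-chromatic graph and $\{u,v\}$ an implicit-edge (respectively implicit-identity) of $G$. Let $0\le \ell\le k-2$ and let $S_1,\dots,S_\ell$ be vertex sets not containing $u$ or $v$ such that, for each $i$, $S_i$ is a critical independent set of $G-(S_1\cup\dots\cup S_{i-1})$. Then $\{u,v\}$ is an implicit-edge (respectively implicit-identity) of $H=G-(S_1\cup\dots\cup S_\ell)$, with respect to $\chi(H)=k-\ell$.
   Context: All graphs are finite, simple and connected. For a graph $G$ and vertices $u,v$, $G-uv$ denotes $G$ with the edge $uv$ removed if $uv\in E(G)$ (and $G$ itself otherwise). A $k$-coloring is a proper vertex coloring with colors from $\{1,\dots,k\}$. Given a $k$-chromatic graph $G$, a pair of distinct vertices $\{u,v\}$ is an implicit-edge of $G$ iff there is no $k$-coloring $c$ of $G-uv$ with $c(u)=c(v)$, and an implicit-identity of $G$ iff there is no $k$-coloring $c$ of $G-uv$ with $c(u)\neq c(v)$. An independent set $S$ of a $k$-chromatic graph $G$ is critical iff $\chi(G-S)=k-1$. *)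

theory Defs
  imports Main
begin

definition simple_graph :: "'a set \<Rightarrow> 'a set set \<Rightarrow> bool" where
  "simple_graph V E \<longleftrightarrow> finite V \<and> (\<forall>e\<in>E. e \<subseteq> V \<and> card e = 2)"

definition connected_graph :: "'a set \<Rightarrow> 'a set set \<Rightarrow> bool" where
  "connected_graph V E \<longleftrightarrow> V \<noteq> {} \<and>
     (\<forall>x\<in>V. \<forall>y\<in>V. (\<lambda>a b. {a, b} \<in> E)\<^sup>*\<^sup>* x y)"

definition coloring :: "'a set \<Rightarrow> 'a set set \<Rightarrow> nat \<Rightarrow> ('a \<Rightarrow> nat) \<Rightarrow> bool" where
  "coloring V E k c \<longleftrightarrow> (\<forall>x\<in>V. c x \<in> {1..k}) \<and> (\<forall>x y. {x, y} \<in> E \<longrightarrow> c x \<noteq> c y)"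

definition chromatic_number :: "'a set \<Rightarrow> 'a set set \<Rightarrow> nat" where
  "chromatic_number V E = (LEAST k. \<exists>c. coloring V E k c)"

definition del_edges :: "'a set \<Rightarrow> 'a set set \<Rightarrow> 'a set set" where
  "del_edges S E = {e \<in> E. e \<inter> S = {}}"

definition rem_edge :: "'a set set \<Rightarrow> 'a \<Rightarrow> 'a \<Rightarrow> 'a set set" where
  "rem_edge E u v = E - {{u, v}}"

definition implicit_edge :: "'a set \<Rightarrow> 'a set set \<Rightarrow> nat \<Rightarrow> 'a \<Rightarrow> 'a \<Rightarrow> bool" where
  "implicit_edge V E k u v \<longleftrightarrow> u \<in> V \<and> v \<in> V \<and> u \<noteq> v \<and>
     \<not> (\<exists>c. coloring V (rem_edge E u v) k c \<and> c u = c v)"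

definition implicit_identity :: "'a set \<Rightarrow> 'a set set \<Rightarrow> nat \<Rightarrow> 'a \<Rightarrow> 'a \<Rightarrow> bool" where
  "implicit_identity V E k u v \<longleftrightarrow> u \<in> V \<and> v \<in> V \<and> u \<noteq> v \<and>
     \<not> (\<exists>c. coloring V (rem_edge E u v) k c \<and> c u \<noteq> c v)"

definition independent_set :: "'a set \<Rightarrow> 'a set set \<Rightarrow> 'a set \<Rightarrow> bool" where
  "independent_set V E S \<longleftrightarrow> S \<subseteq> V \<and> (\<forall>x\<in>S. \<forall>y\<in>S. {x, y} \<notin> E)"

definition critical_independent_set :: "'a set \<Rightarrow> 'a set set \<Rightarrow> 'a set \<Rightarrow> bool" where
  "critical_independent_set V E S \<longleftrightarrow> independent_set V E S \<and>
     chromatic_number (V - S) (del_edges S E) = chromatic_number V E - 1"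

end

theory Submission
  imports Defs
begin

lemma union_Suc: "(\<Union>j<Suc i. S j) = (\<Union>j<i. S j) \<union> S i"
  by (auto simp: lessThan_Suc)

lemma chi_steps:
  assumes "chromatic_number V E = k"
    and "\<forall>i<l. critical_independent_set (V - (\<Union>j<i. S j)) (del_edges (\<Union>j<i. S j) E) (S i)"
    and "i \<le> l"
  shows "chromatic_number (V - (\<Union>j<i. S j)) (del_edges (\<Union>j<i. S j) E) = k - i"
  using assms(3)
proof (induction i)
  case 0
  have "del_edges {} E = E" by (auto simp: del_edges_def)
  then show ?case using assms(1) by simp
next
  case (Suc i)
  have IH: "chromatic_number (V - (\<Union>j<i. S j)) (del_edges (\<Union>j<i. S j) E) = k - i"
    using Suc by simp
  have cr: "critical_independent_set (V - (\<Union>j<i. S j)) (del_edges (\<Union>j<i. S j) E) (S i)"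
    using assms(2) Suc.prems by auto
  have e1: "V - (\<Union>j<Suc i. S j) = (V - (\<Union>j<i. S j)) - S i" by (auto simp: union_Suc)
  have e2: "del_edges (\<Union>j<Suc i. S j) E = del_edges (S i) (del_edges (\<Union>j<i. S j) E)"
    by (auto simp: union_Suc del_edges_def)
  show ?case using cr IH unfolding e1 e2 critical_independent_set_def by simp
qed

lemma extend:
  assumes sg: "simple_graph V E"
    and lk: "l < k"
    and uv: "\<forall>i<l. u \<notin> S i \<and> v \<notin> S i"
    and crit: "\<forall>i<l. critical_independent_set (V - (\<Union>j<i. S j)) (del_edges (\<Union>j<i. S j) E) (S i)"
    and col: "coloring (V - (\<Union>j<l. S j)) (del_edges (\<Union>j<l. S j) E - {{u, v}}) (k - l) c"
  shows "coloring V (E - {{u, v}}) k (\<lambda>x. if x \<in> (\<Union>j<l. S j) then k - (LEAST i. x \<in> S i) else c x)"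
proof -
  define U where "U = (\<Union>j<l. S j)"
  define c' where "c' = (\<lambda>x. if x \<in> U then k - (LEAST i. x \<in> S i) else c x)"
  have least: "(LEAST i. x \<in> S i) < l \<and> x \<in> S (LEAST i. x \<in> S i)" if xU0: "x \<in> U" for x
  proof -
    obtain i where i: "i < l" "x \<in> S i" using xU0 U_def by auto
    have "(LEAST i. x \<in> S i) \<le> i" using i(2) by (rule Least_le)
    moreover have "x \<in> S (LEAST i. x \<in> S i)" using i(2) by (rule LeastI)
    ultimately show ?thesis using i by auto
  qed
  have colr: "\<forall>x\<in>V - U. c x \<in> {1..k - l}"
    and cole: "\<forall>x y. {x, y} \<in> del_edges U E - {{u, v}} \<longrightarrow> c x \<noteq> c y"
    using col unfolding coloring_def U_def by auto
  have range: "c' x \<in> {1..k}" if "x \<in> V" for x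
  proof (cases "x \<in> U")
    case True
    then show ?thesis using least[OF True] lk by (auto simp: c'_def)
  next
    case False
    then show ?thesis using colr that by (force simp: c'_def)
  qed
  have edge: "c' x \<noteq> c' y" if xy: "{x, y} \<in> E - {{u, v}}" for x y
  proof -
    have "x \<noteq> y" using xy sg unfolding simple_graph_def by fastforce
    have xV: "x \<in> V" "y \<in> V" using xy sg unfolding simple_graph_def by auto
    show ?thesis
    proof (cases "x \<in> U")
      case xU: True
      show ?thesis
      proof (cases "y \<in> U")
        case yU: True
        define i where "i = (LEAST i. x \<in> S i)"
        define j where "j = (LEAST i. y \<in> S i)"
        have ix: "i < l" "x \<in> S i" using least[OF xU] i_def by auto
        have jy: "j < l" "y \<in> S j" using least[OF yU] j_def by auto
        show ?thesis
        proof (cases "i = j")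
          case False
          then show ?thesis using ix jy lk xU yU by (auto simp: c'_def i_def[symmetric] j_def[symmetric])
        next
          case True
          have nx: "x \<notin> (\<Union>j'<i. S j')"
          proof
            assume "x \<in> (\<Union>j'<i. S j')"
            then obtain j' where "j' < i" "x \<in> S j'" by auto
            then show False using not_less_Least[of j' "\<lambda>i. x \<in> S i"] i_def by auto
          qed
          have ny: "y \<notin> (\<Union>j'<i. S j')"
          proof
            assume "y \<in> (\<Union>j'<i. S j')"
            then obtain j' where "j' < i" "y \<in> S j'" by auto
            then show False using not_less_Least[of j' "\<lambda>i. y \<in> S i"] j_def True by auto
          qed
          have "{x, y} \<in> del_edges (\<Union>j'<i. S j') E" using xy nx ny by (auto simp: del_edges_def)
          moreover have "independent_set (V - (\<Union>j<i. S j)) (del_edges (\<Union>j<i. S j) E) (S i)"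
            using crit ix unfolding critical_independent_set_def by auto
          ultimately show ?thesis using ix jy True unfolding independent_set_def by auto
        qed
      next
        case yU: False
        have "c y \<le> k - l" using colr xV yU by auto
        then show ?thesis using least[OF xU] xU yU lk by (auto simp: c'_def)
      qed
    next
      case xU: False
      show ?thesis
      proof (cases "y \<in> U")
        case yU: True
        have "c x \<le> k - l" using colr xV xU by auto
        then show ?thesis using least[OF yU] xU yU lk by (auto simp: c'_def)
      next
        case yU: False
        have "{x, y} \<in> del_edges U E - {{u, v}}" using xy xU yU by (auto simp: del_edges_def)
        then show ?thesis using cole xU yU by (auto simp: c'_def)
      qed
    qed
  qed
  show ?thesis using range edge unfolding coloring_def c'_def U_def by blast
qed

theorem theorem3:
  fixes V :: "'a set" and E :: "'a set set" and k l :: nat and u v :: 'a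
    and S :: "nat \<Rightarrow> 'a set"
  assumes "simple_graph V E" and "connected_graph V E"
    and "chromatic_number V E = k"
    and "l + 2 \<le> k"
    and "\<forall>i<l. u \<notin> S i \<and> v \<notin> S i"
    and "\<forall>i<l. critical_independent_set (V - (\<Union>j<i. S j)) (del_edges (\<Union>j<i. S j) E) (S i)"
  shows "chromatic_number (V - (\<Union>j<l. S j)) (del_edges (\<Union>j<l. S j) E) = k - l
    \<and> (implicit_edge V E k u v \<longrightarrow>
         implicit_edge (V - (\<Union>j<l. S j)) (del_edges (\<Union>j<l. S j) E) (k - l) u v)
    \<and> (implicit_identity V E k u v \<longrightarrow>
         implicit_identity (V - (\<Union>j<l. S j)) (del_edges (\<Union>j<l. S j) E) (k - l) u v)"
proof -
  have lk: "l < k" using assms(4) by simp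
  have nU: "u \<notin> (\<Union>j<l. S j)" "v \<notin> (\<Union>j<l. S j)" using assms(5) by auto
  have ext: "coloring V (rem_edge E u v) k (\<lambda>x. if x \<in> (\<Union>j<l. S j) then k - (LEAST i. x \<in> S i) else c x)"
    if "coloring (V - (\<Union>j<l. S j)) (rem_edge (del_edges (\<Union>j<l. S j) E) u v) (k - l) c" for c
    using extend[OF assms(1) lk assms(5) assms(6)] that unfolding rem_edge_def by blast
  have A: "chromatic_number (V - (\<Union>j<l. S j)) (del_edges (\<Union>j<l. S j) E) = k - l"
    using chi_steps[OF assms(3) assms(6), of l] by simp
  have B: "implicit_edge (V - (\<Union>j<l. S j)) (del_edges (\<Union>j<l. S j) E) (k - l) u v"
    if "implicit_edge V E k u v"
  proof -
    { fix c assume c: "coloring (V - (\<Union>j<l. S j)) (rem_edge (del_edges (\<Union>j<l. S j) E) u v) (k - l) c" "c u = c v"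
      have False using ext[OF c(1)] c(2) nU that unfolding implicit_edge_def by auto }
    then show ?thesis using that nU unfolding implicit_edge_def by blast
  qed
  have C: "implicit_identity (V - (\<Union>j<l. S j)) (del_edges (\<Union>j<l. S j) E) (k - l) u v"
    if "implicit_identity V E k u v"
  proof -
    { fix c assume c: "coloring (V - (\<Union>j<l. S j)) (rem_edge (del_edges (\<Union>j<l. S j) E) u v) (k - l) c" "c u \<noteq> c v"
      have False using ext[OF c(1)] c(2) nU that unfolding implicit_identity_def by auto }
    then show ?thesis using that nU unfolding implicit_identity_def by blast
  qed
  show ?thesis using A B C by blast
qed

end
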